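(* Let $n\ge 4$ and let $W_n$ be the wheel graph on $n$ vertices, with incidence matrix \[M=\left[\begin{array}{c|c} \mathbf{1}^T & \mathbf{0}^T \\ \hline I_{n-1} & C \end{array}\right],\] where $C$ is the circulant matrix $\mathrm{circ}(1,0,\ldots,0,1)$ of order $n-1$. Then $CC^T+I_{n-1}$ is invertible and the Moore–Penrose inverse of $M$ is \[M^+=\frac{1}{2(n-1)} \left[\begin{array}{r|c} 2\mathbf{1} & X \\ \hline -\mathbf{1} & Y \end{array}\right],\] where $X=2(CC^T+I_{n-1})^{-1}\left[ (n-1)I_{n-1}-J_{n-1}\right]$ and $Y= J_{n-1}+C^TX$.
   Context: The wheel graph $W_n$ ($n\ge4$) is obtained from a cycle on $n-1$ vertices and an extra vertex $v$ by joining $v$ to every vertex of the cycle. The (vertex-edge) incidence matrix of a graph has $(i,j)$-entry $1$ if vertex $i$ is incident with edge $e_j$ and $0$ otherwise; the displayed block form corresponds to listing the hub $v$ first, then the cycle vertices $1,\dots,n-1$ in cyclic order, and listing the $n-1$ spokes first (spoke $j$ joining $v$ to cycle vertex $j$) followed by the cycle edges. For $c_0,\dots,c_{k-1}$, $\mathrm{circ}(c_0,c_1,\ldots,c_{k-1})$ denotes the $k\times k$ circulant matrix whose $(i,j)$-entry is $c_{(j-i)\bmod k}$ (first row $c_0,\dots,c_{k-1}$, each subsequent row the cyclic right shift of the previous). $\mathbf{1}$ is the all-ones column vector of length $n-1$, $\mathbf{0}$ the zero vector, $J_{n-1}$ the $(n-1)\times(n-1)$ all-ones matrix, $I_{n-1}$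 the identity. The Moore–Penrose inverse $A^+$ of a real matrix $A$ is the unique matrix satisfying $AA^+A=A$, $A^+AA^+=A^+$, $(AA^+)^T=AA^+$, $(A^+A)^T=A^+A$. *)

theory Defs
  imports "Jordan_Normal_Form.Matrix"
begin

definition circ_mat :: "'a list \<Rightarrow> 'a mat" where
  "circ_mat cs = mat (length cs) (length cs)
     (\<lambda>(i,j). cs ! ((j + length cs - i) mod length cs))"

text \<open>All-ones matrix of size r x c (J, or 1 / 1^T as column/row vectors).\<close>
definition ones_mat :: "nat \<Rightarrow> nat \<Rightarrow> 'a :: {zero,one} mat" where
  "ones_mat r c = mat r c (\<lambda>_. 1)"

definition mat_inv :: "'a :: semiring_1 mat \<Rightarrow> 'a mat" where
  "mat_inv A = (THE B. B \<in> carrier_mat (dim_row A) (dim_row A) \<and> inverts_mat A B \<and> inverts_mat B A)"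

definition is_MP_inverse :: "real mat \<Rightarrow> real mat \<Rightarrow> bool" where
  "is_MP_inverse A B \<longleftrightarrow> B \<in> carrier_mat (dim_col A) (dim_row A) \<and>
     A * B * A = A \<and> B * A * B = B \<and>
     transpose_mat (A * B) = A * B \<and> transpose_mat (B * A) = B * A"

definition MP_inverse :: "real mat \<Rightarrow> real mat" where
  "MP_inverse A = (THE B. is_MP_inverse A B)"

end

theory Submission
  imports Defs "Jordan_Normal_Form.Determinant"
begin


lemma sum_two_ind:
  fixes a b m :: nat and f :: "nat \<Rightarrow> real"
  assumes "a < m" "b < m" "a \<noteq> b" "\<And>l. l < m \<Longrightarrow> f l = (if l = a \<or> l = b then 1 else (0::real))"
  shows "sum f {0..<m} = 2"
proof -
  have "sum f {0..<m} = (\<Sum>l\<in>{0..<m}. (if l = a then 1 else 0) + (if l = b then 1 else (0::real)))"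
  proof (rule sum.cong[OF refl])
    fix l assume "l \<in> {0..<m}"
    then show "f l = (if l = a then 1 else 0) + (if l = b then 1 else (0::real))"
      using assms(4)[of l] assms(3) by auto
  qed
  also have "\<dots> = (\<Sum>l\<in>{0..<m}. (if l = a then 1 else 0)) + (\<Sum>l\<in>{0..<m}. (if l = b then 1 else (0::real)))"
    by (rule sum.distrib)
  also have "\<dots> = 2"
    using sum.delta[of "{0..<m}" a "\<lambda>_. 1::real"] sum.delta[of "{0..<m}" b "\<lambda>_. 1::real"] assms(1,2) by simp
  finally show ?thesis .
qed

definition cyc :: "nat \<Rightarrow> real mat" where
  "cyc m = circ_mat ([1] @ replicate (m - 2) 0 @ [1])"

lemma cyc_carrier: "m \<ge> 2 \<Longrightarrow> cyc m \<in> carrier_mat m m"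
  unfolding cyc_def circ_mat_def by auto

lemma cyc_entry:
  assumes "m \<ge> 3" "i < m" "j < m"
  shows "cyc m $$ (i,j) = (if j = i \<or> i = Suc j \<or> (i = 0 \<and> j = m - 1) then 1 else 0)"
proof -
  have len: "length ([1] @ replicate (m - 2) 0 @ [1::real]) = m" using assms by auto
  define k where "k = (j + m - i) mod m"
  have k: "k < m" unfolding k_def using assms by auto
  have nth: "([1] @ replicate (m - 2) 0 @ [1::real]) ! k = (if k = 0 \<or> k = m - 1 then 1 else 0)"
    using k assms by (auto simp: nth_append)
  have kj: "k = (if j \<ge> i then j - i else j + m - i)"
    unfolding k_def using assms
    by (auto simp: mod_if)
  have "cyc m $$ (i,j) = ([1] @ replicate (m - 2) 0 @ [1::real]) ! k"
    unfolding cyc_def circ_mat_def k_def using assms len by simp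
  also have "\<dots> = (if k = 0 \<or> k = m - 1 then 1 else 0)" by (rule nth)
  also have "\<dots> = (if j = i \<or> i = Suc j \<or> (i = 0 \<and> j = m - 1) then 1 else 0)"
    unfolding kj using assms by auto
  finally show ?thesis .
qed

lemma cyc_mult_ones:
  assumes m: "m \<ge> 3"
  shows "cyc m * ones_mat m k = 2 \<cdot>\<^sub>m ones_mat m k"
proof (rule eq_matI)
  fix i j assume i: "i < dim_row (2 \<cdot>\<^sub>m ones_mat m k)" and j: "j < dim_col (2 \<cdot>\<^sub>m (ones_mat m k :: real mat))"
  have C: "cyc m \<in> carrier_mat m m" using cyc_carrier m by auto
  from i j have i': "i < m" and j': "j < k" by (auto simp: ones_mat_def)
  have "(cyc m * ones_mat m k) $$ (i,j) = (\<Sum>l\<in>{0..<m}. cyc m $$ (i,l))"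
    using C i' j' by (simp add: scalar_prod_def ones_mat_def)
  also have "\<dots> = 2"
    by (rule sum_two_ind[where a = i and b = "if i = 0 then m - 1 else i - 1"],
        insert m i', auto simp: cyc_entry)
  finally show "(cyc m * ones_mat m k) $$ (i,j) = (2 \<cdot>\<^sub>m ones_mat m k) $$ (i,j)"
    using i' j' by (simp add: ones_mat_def)
qed (insert m, auto simp: ones_mat_def cyc_def circ_mat_def)

lemma ones_mult_cyc:
  assumes m: "m \<ge> 3"
  shows "ones_mat k m * cyc m = 2 \<cdot>\<^sub>m ones_mat k m"
proof (rule eq_matI)
  fix i j assume i: "i < dim_row (2 \<cdot>\<^sub>m ones_mat k m)" and j: "j < dim_col (2 \<cdot>\<^sub>m (ones_mat k m :: real mat))"
  have C: "cyc m \<in> carrier_mat m m" using cyc_carrier m by auto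
  from i j have i': "i < k" and j': "j < m" by (auto simp: ones_mat_def)
  have "(ones_mat k m * cyc m) $$ (i,j) = (\<Sum>l\<in>{0..<m}. cyc m $$ (l,j))"
    using C i' j' by (simp add: scalar_prod_def ones_mat_def)
  also have "\<dots> = 2"
    by (rule sum_two_ind[where a = j and b = "if j = m - 1 then 0 else Suc j"],
        insert m j', auto simp: cyc_entry)
  finally show "(ones_mat k m * cyc m) $$ (i,j) = (2 \<cdot>\<^sub>m ones_mat k m) $$ (i,j)"
    using i' j' by (simp add: ones_mat_def)
qed (insert m, auto simp: ones_mat_def cyc_def circ_mat_def)

lemma ones_carrier[simp]: "ones_mat a b \<in> carrier_mat a b"
  by (simp add: ones_mat_def)

lemma ones_mult_ones: "ones_mat a m * ones_mat m b = (of_nat m :: real) \<cdot>\<^sub>m ones_mat a b"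
  by (rule eq_matI) (auto simp: ones_mat_def scalar_prod_def)

lemma transpose_ones[simp]: "transpose_mat (ones_mat a b) = ones_mat b a"
  by (rule eq_matI) (auto simp: ones_mat_def)

lemma self_scalar_prod_zero:
  fixes v :: "real vec"
  assumes v: "v \<in> carrier_vec m" and z: "v \<bullet> v = 0"
  shows "v = 0\<^sub>v m"
proof -
  have "(\<Sum>i\<in>{0..<m}. v $ i * v $ i) = 0" using z v by (simp add: scalar_prod_def)
  then have "\<forall>i\<in>{0..<m}. v $ i * v $ i = 0"
    by (subst (asm) sum_nonneg_eq_0_iff) auto
  then show ?thesis using v by (intro eq_vecI) auto
qed

lemma self_scalar_prod_nonneg:
  fixes v :: "real vec"
  shows "v \<bullet> v \<ge> 0"
  by (simp add: scalar_prod_def sum_nonneg)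

lemma K_invertible:
  fixes C :: "real mat"
  assumes C: "C \<in> carrier_mat m m"
  shows "invertible_mat (C * transpose_mat C + 1\<^sub>m m)"
proof -
  define K where "K = C * transpose_mat C + 1\<^sub>m m"
  have CT: "transpose_mat C \<in> carrier_mat m m" using C by auto
  have K: "K \<in> carrier_mat m m" unfolding K_def using C by auto
  have "det K \<noteq> 0"
  proof
    assume "det K = 0"
    then obtain v where v: "v \<in> carrier_vec m" "v \<noteq> 0\<^sub>v m" "K *\<^sub>v v = 0\<^sub>v m"
      using det_0_iff_vec_prod_zero[OF K] by auto
    define w where "w = transpose_mat C *\<^sub>v v"
    have w: "w \<in> carrier_vec m" unfolding w_def using C v(1) by (intro mult_mat_vec_carrier[of _ m m]) auto
    have "K *\<^sub>v v = C *\<^sub>v w + v"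
      unfolding K_def w_def using C CT v(1)
      by (simp add: add_mult_distrib_mat_vec[of _ m m])
    then have "C *\<^sub>v w + v = 0\<^sub>v m" using v(3) by simp
    then have "0 = v \<bullet> (C *\<^sub>v w + v)" using v(1) by simp
    also have "\<dots> = v \<bullet> (C *\<^sub>v w) + v \<bullet> v"
      using C v(1) w by (simp add: scalar_prod_add_distrib[of _ m])
    also have "v \<bullet> (C *\<^sub>v w) = w \<bullet> w"
      unfolding w_def[symmetric] using transpose_vec_mult_scalar[OF C w v(1)] w_def by simp
    finally have "w \<bullet> w + v \<bullet> v = 0" by simp
    with self_scalar_prod_nonneg[of w] self_scalar_prod_nonneg[of v]
    have "v \<bullet> v = 0" by linarith
    with self_scalar_prod_zero[OF v(1)] v(2) show False by simp
  qed
  from det_non_zero_imp_unit[OF K this, of undefined]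
  obtain B where B: "B \<in> carrier_mat m m" "B * K = 1\<^sub>m m" "K * B = 1\<^sub>m m"
    unfolding Units_def ring_mat_def by auto
  have "inverts_mat K B" "inverts_mat B K" using B K by (auto simp: inverts_mat_def)
  then show ?thesis unfolding K_def[symmetric] invertible_mat_def square_mat.simps using K by auto
qed

lemma mat_inv_props:
  fixes K :: "real mat"
  assumes K: "K \<in> carrier_mat m m" and inv: "invertible_mat K"
  shows "mat_inv K \<in> carrier_mat m m" "K * mat_inv K = 1\<^sub>m m" "mat_inv K * K = 1\<^sub>m m"
proof -
  from inv obtain B where B: "inverts_mat K B" "inverts_mat B K" unfolding invertible_mat_def by auto
  have KB: "K * B = 1\<^sub>m m" using B(1) K by (simp add: inverts_mat_def)
  have Bc: "B \<in> carrier_mat m m"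
  proof -
    have "dim_col (K * B) = m" using KB by simp
    moreover have "dim_row (B * K) = dim_col (B * K)" using B(2) by (simp add: inverts_mat_def)
    ultimately show ?thesis using K by auto
  qed
  have BK: "B * K = 1\<^sub>m m" using B(2) Bc by (simp add: inverts_mat_def)
  have P: "B \<in> carrier_mat (dim_row K) (dim_row K) \<and> inverts_mat K B \<and> inverts_mat B K"
    using Bc B K by auto
  have U: "B' = B" if "B' \<in> carrier_mat (dim_row K) (dim_row K) \<and> inverts_mat K B' \<and> inverts_mat B' K" for B'
  proof -
    from that K have B': "B' \<in> carrier_mat m m" "B' * K = 1\<^sub>m m" by (auto simp: inverts_mat_def)
    have "B' = B' * (K * B)" unfolding KB using B' by simp
    also have "\<dots> = (B' * K) * B" by (rule assoc_mult_mat[symmetric, OF B'(1) K Bc])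
    also have "\<dots> = B" using B' Bc by simp
    finally show ?thesis .
  qed
  have "mat_inv K = B" unfolding mat_inv_def using P U by (rule the_equality)
  then show "mat_inv K \<in> carrier_mat m m" "K * mat_inv K = 1\<^sub>m m" "mat_inv K * K = 1\<^sub>m m"
    using Bc KB BK by auto
qed



lemma MP_unique:
  assumes B: "is_MP_inverse A B" and D: "is_MP_inverse A D"
  shows "B = D"
proof -
  define r c where "r = dim_row A" and "c = dim_col A"
  have Ac: "A \<in> carrier_mat r c" unfolding r_def c_def by auto
  from B have Bc: "B \<in> carrier_mat c r" and ABA: "A * B * A = A" and BAB: "B * A * B = B"
    and sAB: "transpose_mat (A * B) = A * B" and sBA: "transpose_mat (B * A) = B * A"
    unfolding is_MP_inverse_def r_def c_def by auto
  from D have Dc: "D \<in> carrier_mat c r" and ADA: "A * D * A = A" and DAD: "D * A * D = D"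
    and sAD: "transpose_mat (A * D) = A * D" and sDA: "transpose_mat (D * A) = D * A"
    unfolding is_MP_inverse_def r_def c_def by auto
  have AB: "A * B \<in> carrier_mat r r" and AD: "A * D \<in> carrier_mat r r"
    and BA: "B * A \<in> carrier_mat c c" and DA: "D * A \<in> carrier_mat c c"
    using Ac Bc Dc by auto
  have eq1: "A * B = A * D"
  proof -
    have "A * B = (A * D * A) * B" using ADA by simp
    also have "\<dots> = (A * D) * (A * B)" by (rule assoc_mult_mat[OF AD Ac Bc])
    also have "\<dots> = transpose_mat (A * D) * transpose_mat (A * B)" using sAD sAB by simp
    also have "\<dots> = transpose_mat ((A * B) * (A * D))" by (rule transpose_mult[OF AB AD, symmetric])
    also have "(A * B) * (A * D) = ((A * B) * A) * D" by (rule assoc_mult_mat[OF AB Ac Dc, symmetric])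
    also have "\<dots> = A * D" using ABA by simp
    finally show ?thesis using sAD by simp
  qed
  have eq2: "B * A = D * A"
  proof -
    have "B * A = B * (A * D * A)" using ADA by simp
    also have "\<dots> = (B * A) * (D * A)"
      using assoc_mult_mat[OF Bc Ac Dc] assoc_mult_mat[OF BA Dc Ac] assoc_mult_mat[OF Bc AD Ac]
        assoc_mult_mat[OF Ac Dc Ac] by simp
    also have "\<dots> = transpose_mat (B * A) * transpose_mat (D * A)" using sBA sDA by simp
    also have "\<dots> = transpose_mat ((D * A) * (B * A))" by (rule transpose_mult[OF DA BA, symmetric])
    also have "(D * A) * (B * A) = D * (A * B * A)"
      using assoc_mult_mat[OF Dc Ac Bc] assoc_mult_mat[OF DA Bc Ac] assoc_mult_mat[OF Dc AB Ac] by simp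
    also have "\<dots> = D * A" using ABA by simp
    finally show ?thesis using sDA by simp
  qed
  have "B = (B * A) * B" using BAB by simp
  also have "\<dots> = B * (A * B)" by (rule assoc_mult_mat[OF Bc Ac Bc])
  also have "\<dots> = B * (A * D)" using eq1 by simp
  also have "\<dots> = (B * A) * D" by (rule assoc_mult_mat[OF Bc Ac Dc, symmetric])
  also have "\<dots> = (D * A) * D" using eq2 by simp
  also have "\<dots> = D" using DAD by simp
  finally show ?thesis .
qed

lemma MP_inverse_eqI: "is_MP_inverse A B \<Longrightarrow> MP_inverse A = B"
  unfolding MP_inverse_def using MP_unique by blast

lemma smult_cancel:
  fixes A B :: "real mat"
  assumes "A = c \<cdot>\<^sub>m B" "c \<noteq> 0"
  shows "B = (1 / c) \<cdot>\<^sub>m A"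
  using assms by (auto intro!: eq_matI)



lemma dim_ones[simp]: "dim_row (ones_mat a b) = a" "dim_col (ones_mat a b) = b"
  by (simp_all add: ones_mat_def)

lemma main_alg:
  fixes C :: "real mat" and m :: nat
  assumes C: "C \<in> carrier_mat m m" and m: "m > 0"
    and CJ: "\<And>k. C * ones_mat m k = 2 \<cdot>\<^sub>m ones_mat m k"
    and JC: "\<And>k. ones_mat k m * C = 2 \<cdot>\<^sub>m ones_mat k m"
  defines "M \<equiv> four_block_mat (ones_mat 1 m) (0\<^sub>m 1 m) (1\<^sub>m m) C"
  defines "K \<equiv> C * transpose_mat C + 1\<^sub>m m"
  defines "X \<equiv> 2 \<cdot>\<^sub>m (mat_inv K * (of_nat m \<cdot>\<^sub>m 1\<^sub>m m - ones_mat m m))"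
  defines "Y \<equiv> ones_mat m m + transpose_mat C * X"
  shows "invertible_mat K \<and> MP_inverse M = (1 / (2 * of_nat m)) \<cdot>\<^sub>m
           four_block_mat (2 \<cdot>\<^sub>m ones_mat m 1) X (- ones_mat m 1) Y"
proof -
  have CT: "transpose_mat C \<in> carrier_mat m m" using C by auto
  have CTJ: "transpose_mat C * ones_mat m k = 2 \<cdot>\<^sub>m ones_mat m k" for k
  proof -
    have "transpose_mat C * ones_mat m k = transpose_mat (ones_mat k m * C)"
      using transpose_mult[OF ones_carrier C] by simp
    also have "\<dots> = 2 \<cdot>\<^sub>m ones_mat m k" unfolding JC by (rule eq_matI) (auto simp: ones_mat_def)
    finally show ?thesis .
  qed
  have JCT: "ones_mat k m * transpose_mat C = 2 \<cdot>\<^sub>m ones_mat k m" for k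
  proof -
    have "ones_mat k m * transpose_mat C = transpose_mat (C * ones_mat m k)"
      using transpose_mult[OF C ones_carrier] by simp
    also have "\<dots> = 2 \<cdot>\<^sub>m ones_mat k m" unfolding CJ by (rule eq_matI) (auto simp: ones_mat_def)
    finally show ?thesis .
  qed
  have CCT: "C * transpose_mat C \<in> carrier_mat m m" using C CT by auto
  have Kc: "K \<in> carrier_mat m m" unfolding K_def using CCT by auto
  have invK: "invertible_mat K" unfolding K_def by (rule K_invertible[OF C])
  define Ki where "Ki = mat_inv K"
  have Kic: "Ki \<in> carrier_mat m m" and KKi: "K * Ki = 1\<^sub>m m" and KiK: "Ki * K = 1\<^sub>m m"
    using mat_inv_props[OF Kc invK] unfolding Ki_def by auto
  have KT: "transpose_mat K = K"
    unfolding K_def using transpose_add[OF CCT one_carrier_mat] transpose_mult[OF C CT] by simp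
  have KJ: "K * ones_mat m k = 5 \<cdot>\<^sub>m ones_mat m k" for k
  proof -
    have "K * ones_mat m k = C * transpose_mat C * ones_mat m k + ones_mat m k"
      unfolding K_def using add_mult_distrib_mat[OF CCT one_carrier_mat ones_carrier] by simp
    also have "C * transpose_mat C * ones_mat m k = C * (transpose_mat C * ones_mat m k)"
      by (rule assoc_mult_mat[OF C CT ones_carrier])
    also have "\<dots> = 4 \<cdot>\<^sub>m ones_mat m k" unfolding CTJ mult_smult_distrib[OF C ones_carrier] CJ
      by (rule eq_matI) (auto simp: ones_mat_def)
    also have "4 \<cdot>\<^sub>m ones_mat m k + ones_mat m k = 5 \<cdot>\<^sub>m (ones_mat m k :: real mat)"
      by (rule eq_matI) (auto simp: ones_mat_def)
    finally show ?thesis .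
  qed
  have JK: "ones_mat k m * K = 5 \<cdot>\<^sub>m ones_mat k m" for k
  proof -
    have "ones_mat k m * K = ones_mat k m * (C * transpose_mat C) + ones_mat k m"
      unfolding K_def using mult_add_distrib_mat[OF ones_carrier CCT one_carrier_mat] by simp
    also have "ones_mat k m * (C * transpose_mat C) = (ones_mat k m * C) * transpose_mat C"
      by (rule assoc_mult_mat[OF ones_carrier C CT, symmetric])
    also have "\<dots> = 4 \<cdot>\<^sub>m ones_mat k m" unfolding JC mult_smult_assoc_mat[OF ones_carrier CT] JCT
      by (rule eq_matI) (auto simp: ones_mat_def)
    also have "4 \<cdot>\<^sub>m ones_mat k m + ones_mat k m = 5 \<cdot>\<^sub>m (ones_mat k m :: real mat)"
      by (rule eq_matI) (auto simp: ones_mat_def)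
    finally show ?thesis .
  qed
  have KiJ: "Ki * ones_mat m k = (1/5) \<cdot>\<^sub>m ones_mat m k" for k
  proof -
    have "ones_mat m k = (Ki * K) * (ones_mat m k :: real mat)" unfolding KiK by simp
    also have "\<dots> = Ki * (K * ones_mat m k)" by (rule assoc_mult_mat[OF Kic Kc ones_carrier])
    also have "\<dots> = 5 \<cdot>\<^sub>m (Ki * ones_mat m k)" unfolding KJ mult_smult_distrib[OF Kic ones_carrier] ..
    finally show ?thesis by (rule smult_cancel) simp
  qed
  have JKi: "ones_mat k m * Ki = (1/5) \<cdot>\<^sub>m ones_mat k m" for k
  proof -
    have "ones_mat k m = (ones_mat k m :: real mat) * (K * Ki)" unfolding KKi by simp
    also have "\<dots> = (ones_mat k m * K) * Ki" by (rule assoc_mult_mat[OF ones_carrier Kc Kic, symmetric])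
    also have "\<dots> = 5 \<cdot>\<^sub>m (ones_mat k m * Ki)" unfolding JK mult_smult_assoc_mat[OF ones_carrier Kic] ..
    finally show ?thesis by (rule smult_cancel) simp
  qed
  have KiT: "transpose_mat Ki = Ki"
  proof -
    have KiTc: "transpose_mat Ki \<in> carrier_mat m m" using Kic by auto
    have L: "transpose_mat Ki * K = 1\<^sub>m m"
      using transpose_mult[OF Kc Kic] KT KKi by simp
    have "transpose_mat Ki = transpose_mat Ki * (K * Ki)" unfolding KKi using KiTc by simp
    also have "\<dots> = (transpose_mat Ki * K) * Ki" by (rule assoc_mult_mat[OF KiTc Kc Kic, symmetric])
    also have "\<dots> = Ki" unfolding L using Kic by simp
    finally show ?thesis .
  qed
  define P where "P = (of_nat m \<cdot>\<^sub>m 1\<^sub>m m - ones_mat m m :: real mat)"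
  have Pc: "P \<in> carrier_mat m m" unfolding P_def by auto
  have PT: "transpose_mat P = P" unfolding P_def by (rule eq_matI) (auto simp: ones_mat_def)
  have mIc: "of_nat m \<cdot>\<^sub>m 1\<^sub>m m \<in> carrier_mat m m" by auto
  have KiP: "Ki * P = of_nat m \<cdot>\<^sub>m Ki - (1/5) \<cdot>\<^sub>m ones_mat m m"
    unfolding P_def mult_minus_distrib_mat[OF Kic mIc ones_carrier] mult_smult_distrib[OF Kic one_carrier_mat] KiJ
    using Kic by simp
  have PKi: "P * Ki = of_nat m \<cdot>\<^sub>m Ki - (1/5) \<cdot>\<^sub>m ones_mat m m"
    unfolding P_def minus_mult_distrib_mat[OF mIc ones_carrier Kic] mult_smult_assoc_mat[OF one_carrier_mat Kic] JKi
    using Kic by simp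
  have KiPc: "Ki * P \<in> carrier_mat m m" using Kic Pc by auto
  have X: "X = 2 \<cdot>\<^sub>m (Ki * P)" unfolding X_def Ki_def P_def ..
  have Xc: "X \<in> carrier_mat m m" unfolding X using KiPc by auto
  have XT: "transpose_mat X = X"
  proof -
    have "transpose_mat X = 2 \<cdot>\<^sub>m transpose_mat (Ki * P)" unfolding X by (rule eq_matI) auto
    also have "transpose_mat (Ki * P) = P * Ki" using transpose_mult[OF Kic Pc] PT KiT by simp
    finally show ?thesis unfolding X PKi KiP .
  qed
  have rX: "ones_mat 1 m * X = 0\<^sub>m 1 m"
  proof -
    have rP: "ones_mat 1 m * P = 0\<^sub>m 1 m"
      unfolding P_def mult_minus_distrib_mat[OF ones_carrier mIc ones_carrier]
        mult_smult_distrib[OF ones_carrier one_carrier_mat] ones_mult_ones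
      by (rule eq_matI) (auto simp: ones_mat_def)
    have "ones_mat 1 m * X = 2 \<cdot>\<^sub>m ((ones_mat 1 m * Ki) * P)"
      unfolding X mult_smult_distrib[OF ones_carrier KiPc] assoc_mult_mat[OF ones_carrier Kic Pc] ..
    also have "\<dots> = 2 \<cdot>\<^sub>m ((1/5) \<cdot>\<^sub>m (ones_mat 1 m * P))"
      unfolding JKi mult_smult_assoc_mat[OF ones_carrier Pc] ..
    also have "\<dots> = 0\<^sub>m 1 m" unfolding rP by (rule eq_matI) auto
    finally show ?thesis .
  qed
  have KX: "K * X = 2 \<cdot>\<^sub>m P"
    unfolding X mult_smult_distrib[OF Kc KiPc] assoc_mult_mat[OF Kc Kic Pc, symmetric] KKi
    using Pc by simp
  have CTXc: "transpose_mat C * X \<in> carrier_mat m m" using CT Xc by auto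
  have Yc: "Y \<in> carrier_mat m m" unfolding Y_def using CTXc by auto
  have XCY: "X + C * Y = (2 * of_nat m) \<cdot>\<^sub>m 1\<^sub>m m"
  proof -
    have h1: "C * Y = 2 \<cdot>\<^sub>m ones_mat m m + (C * transpose_mat C) * X"
      unfolding Y_def mult_add_distrib_mat[OF C ones_carrier CTXc] CJ assoc_mult_mat[OF C CT Xc] ..
    have h2: "(C * transpose_mat C) * X + X = 2 \<cdot>\<^sub>m P"
      using KX unfolding K_def add_mult_distrib_mat[OF CCT one_carrier_mat Xc] using Xc by simp
    have CCXc: "(C * transpose_mat C) * X \<in> carrier_mat m m" using CCT Xc by auto
    show ?thesis
    proof (rule eq_matI)
      fix i j assume ij: "i < dim_row ((2 * of_nat m) \<cdot>\<^sub>m 1\<^sub>m m :: real mat)"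
        "j < dim_col ((2 * of_nat m) \<cdot>\<^sub>m 1\<^sub>m m :: real mat)"
      then have i: "i < m" and j: "j < m" by auto
      have e2: "((C * transpose_mat C) * X) $$ (i,j) + X $$ (i,j) = 2 * P $$ (i,j)"
        using arg_cong[OF h2, of "\<lambda>A. A $$ (i,j)"] CCXc Xc Pc i j by simp
      show "(X + C * Y) $$ (i,j) = ((2 * of_nat m) \<cdot>\<^sub>m 1\<^sub>m m :: real mat) $$ (i,j)"
        unfolding h1 using e2 i j carrier_matD[OF CCXc] carrier_matD[OF Xc]
        by (simp add: P_def ones_mat_def algebra_simps)
    qed (use Xc C Yc in auto)
  qed
  have uc: "2 \<cdot>\<^sub>m ones_mat m 1 \<in> carrier_mat m (1::nat)" by auto
  have uc': "- ones_mat m 1 \<in> carrier_mat m (1::nat)" by auto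
  define B0 where "B0 = four_block_mat (2 \<cdot>\<^sub>m ones_mat m 1) X (- ones_mat m 1) Y"
  define c where "c = 1 / (2 * of_nat m :: real)"
  define B where "B = c \<cdot>\<^sub>m B0"
  have B0c: "B0 \<in> carrier_mat (m + m) (1 + m)" unfolding B0_def using uc uc' Xc Yc by auto
  have Bc: "B \<in> carrier_mat (m + m) (1 + m)" unfolding B_def using B0c by auto
  have Mc: "M \<in> carrier_mat (1 + m) (m + m)" unfolding M_def using C by auto
  have MB0: "M * B0 = (2 * of_nat m) \<cdot>\<^sub>m 1\<^sub>m (1 + m)"
  proof -
    have "M * B0 = four_block_mat
        (ones_mat 1 m * (2 \<cdot>\<^sub>m ones_mat m 1) + 0\<^sub>m 1 m * - ones_mat m 1) (ones_mat 1 m * X + 0\<^sub>m 1 m * Y)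
        (1\<^sub>m m * (2 \<cdot>\<^sub>m ones_mat m 1) + C * - ones_mat m 1) (1\<^sub>m m * X + C * Y)"
      unfolding M_def B0_def
      by (rule mult_four_block_mat[OF ones_carrier zero_carrier_mat one_carrier_mat C uc Xc uc' Yc])
    also have "\<dots> = four_block_mat ((2 * of_nat m) \<cdot>\<^sub>m 1\<^sub>m 1) (0\<^sub>m 1 m) (0\<^sub>m m 1) ((2 * of_nat m) \<cdot>\<^sub>m 1\<^sub>m m)"
    proof (rule cong_four_block_mat)
      show "ones_mat 1 m * (2 \<cdot>\<^sub>m ones_mat m 1) + 0\<^sub>m 1 m * - ones_mat m 1 = (2 * of_nat m) \<cdot>\<^sub>m (1\<^sub>m 1 :: real mat)"
        unfolding mult_smult_distrib[OF ones_carrier ones_carrier] ones_mult_ones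
        by (rule eq_matI) (auto simp: ones_mat_def)
      show "ones_mat 1 m * X + 0\<^sub>m 1 m * Y = 0\<^sub>m 1 m" unfolding rX using Yc by auto
      show "1\<^sub>m m * (2 \<cdot>\<^sub>m ones_mat m 1) + C * - ones_mat m 1 = (0\<^sub>m m 1 :: real mat)"
      proof -
        have "C * - ones_mat m 1 = - (2 \<cdot>\<^sub>m ones_mat m 1)"
          using uminus_mult_right_mat[of C "ones_mat m 1"] CJ[of 1] C by simp
        then show ?thesis by (intro eq_matI) (auto simp: ones_mat_def)
      qed
      show "1\<^sub>m m * X + C * Y = (2 * of_nat m) \<cdot>\<^sub>m 1\<^sub>m m" using XCY Xc by simp
    qed
    also have "\<dots> = (2 * of_nat m) \<cdot>\<^sub>m four_block_mat (1\<^sub>m 1) (0\<^sub>m 1 m) (0\<^sub>m m 1) (1\<^sub>m m)"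
      by (subst smult_four_block_mat[of _ 1 1 _ m _ m]) auto
    also have "\<dots> = (2 * of_nat m) \<cdot>\<^sub>m 1\<^sub>m (1 + m)" by simp
    finally show ?thesis .
  qed
  have MB: "M * B = 1\<^sub>m (1 + m)"
    unfolding B_def mult_smult_distrib[OF Mc B0c] MB0 using m
    by (intro eq_matI) (auto simp: c_def)
  have TLc: "2 \<cdot>\<^sub>m ones_mat m m + X \<in> carrier_mat m m" using Xc by auto
  have XCc: "X * C \<in> carrier_mat m m" using Xc C by auto
  have Zc: "transpose_mat C * (X * C) \<in> carrier_mat m m" using CT XCc by auto
  have BRc: "2 \<cdot>\<^sub>m ones_mat m m + transpose_mat C * (X * C) \<in> carrier_mat m m" using Zc by auto
  have B0M: "B0 * M = four_block_mat (2 \<cdot>\<^sub>m ones_mat m m + X) (X * C) (transpose_mat C * X)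
      (2 \<cdot>\<^sub>m ones_mat m m + transpose_mat C * (X * C))"
  proof -
    have "B0 * M = four_block_mat
       (2 \<cdot>\<^sub>m ones_mat m 1 * ones_mat 1 m + X * 1\<^sub>m m) (2 \<cdot>\<^sub>m ones_mat m 1 * 0\<^sub>m 1 m + X * C)
       (- ones_mat m 1 * ones_mat 1 m + Y * 1\<^sub>m m) (- ones_mat m 1 * 0\<^sub>m 1 m + Y * C)"
      unfolding M_def B0_def
      by (rule mult_four_block_mat[OF uc Xc uc' Yc ones_carrier zero_carrier_mat one_carrier_mat C])
    also have "\<dots> = four_block_mat (2 \<cdot>\<^sub>m ones_mat m m + X) (X * C) (transpose_mat C * X)
      (2 \<cdot>\<^sub>m ones_mat m m + transpose_mat C * (X * C))"
    proof (rule cong_four_block_mat)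
      show "2 \<cdot>\<^sub>m ones_mat m 1 * ones_mat 1 m + X * 1\<^sub>m m = 2 \<cdot>\<^sub>m ones_mat m m + X"
        unfolding mult_smult_assoc_mat[OF ones_carrier ones_carrier] ones_mult_ones using Xc
        by (intro eq_matI) (auto simp: ones_mat_def)
      show "2 \<cdot>\<^sub>m ones_mat m 1 * 0\<^sub>m 1 m + X * C = X * C" using XCc by auto
      show "- ones_mat m 1 * ones_mat 1 m + Y * 1\<^sub>m m = transpose_mat C * X"
      proof -
        have e: "- ones_mat m 1 * ones_mat 1 m = - (ones_mat m m :: real mat)"
          by (rule eq_matI) (auto simp: ones_mat_def scalar_prod_def)
        have e2: "Y * 1\<^sub>m m = Y" using Yc by simp
        show ?thesis unfolding e e2 Y_def using carrier_matD[OF CTXc]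
          by (intro eq_matI) (auto simp: ones_mat_def)
      qed
      have "Y * C = ones_mat m m * C + (transpose_mat C * X) * C"
        unfolding Y_def by (rule add_mult_distrib_mat[OF ones_carrier CTXc C])
      also have "\<dots> = 2 \<cdot>\<^sub>m ones_mat m m + transpose_mat C * (X * C)"
        unfolding JC assoc_mult_mat[OF CT Xc C] ..
      finally show "- ones_mat m 1 * 0\<^sub>m 1 m + Y * C = 2 \<cdot>\<^sub>m ones_mat m m + transpose_mat C * (X * C)"
        using BRc by auto
    qed
    finally show ?thesis .
  qed
  have T1: "transpose_mat (2 \<cdot>\<^sub>m ones_mat m m + X) = 2 \<cdot>\<^sub>m ones_mat m m + X"
  proof -
    have "transpose_mat (2 \<cdot>\<^sub>m ones_mat m m + X) = transpose_mat (2 \<cdot>\<^sub>m ones_mat m m) + transpose_mat X"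
      by (rule transpose_add[OF _ Xc]) auto
    also have "transpose_mat (2 \<cdot>\<^sub>m ones_mat m m) = 2 \<cdot>\<^sub>m (ones_mat m m :: real mat)"
      by (rule eq_matI) (auto simp: ones_mat_def)
    finally show ?thesis unfolding XT .
  qed
  have T2: "transpose_mat (transpose_mat C * X) = X * C"
    using transpose_mult[OF CT Xc] XT by simp
  have T3: "transpose_mat (X * C) = transpose_mat C * X"
    using transpose_mult[OF Xc C] XT by simp
  have T4: "transpose_mat (2 \<cdot>\<^sub>m ones_mat m m + transpose_mat C * (X * C)) = 2 \<cdot>\<^sub>m ones_mat m m + transpose_mat C * (X * C)"
  proof -
    have Z: "transpose_mat (transpose_mat C * (X * C)) = transpose_mat C * (X * C)"
      using transpose_mult[OF CT XCc] T3 assoc_mult_mat[OF CT Xc C] by simp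
    have "transpose_mat (2 \<cdot>\<^sub>m ones_mat m m + transpose_mat C * (X * C)) =
       transpose_mat (2 \<cdot>\<^sub>m ones_mat m m) + transpose_mat (transpose_mat C * (X * C))"
      by (rule transpose_add[OF _ Zc]) auto
    also have "transpose_mat (2 \<cdot>\<^sub>m ones_mat m m) = 2 \<cdot>\<^sub>m (ones_mat m m :: real mat)"
      by (rule eq_matI) (auto simp: ones_mat_def)
    finally show ?thesis unfolding Z .
  qed
  have B0MT: "transpose_mat (B0 * M) = B0 * M"
    unfolding B0M transpose_four_block_mat[OF TLc XCc CTXc BRc] T1 T2 T3 T4 ..
  have BMT: "transpose_mat (B * M) = B * M"
  proof -
    have "B * M = c \<cdot>\<^sub>m (B0 * M)" unfolding B_def by (rule mult_smult_assoc_mat[OF B0c Mc])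
    moreover have "transpose_mat (c \<cdot>\<^sub>m (B0 * M)) = c \<cdot>\<^sub>m transpose_mat (B0 * M)"
      by (rule eq_matI) auto
    ultimately show ?thesis using B0MT by simp
  qed
  have MP: "is_MP_inverse M B"
    unfolding is_MP_inverse_def
  proof (intro conjI)
    show "B \<in> carrier_mat (dim_col M) (dim_row M)" using Bc Mc by auto
    show "M * B * M = M" unfolding MB using Mc by simp
    show "B * M * B = B" unfolding assoc_mult_mat[OF Bc Mc Bc] MB using Bc by simp
    show "transpose_mat (M * B) = M * B" unfolding MB by simp
    show "transpose_mat (B * M) = B * M" by (rule BMT)
  qed
  show ?thesis
    using invK MP_inverse_eqI[OF MP] unfolding B_def B0_def c_def by simp
qed



theorem mainTheorem1:
  fixes n :: nat
  assumes "n \<ge> 4"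
  defines "C \<equiv> (circ_mat ([1] @ replicate (n - 3) 0 @ [1]) :: real mat)"
  defines "M \<equiv> four_block_mat (ones_mat 1 (n - 1)) (0\<^sub>m 1 (n - 1)) (1\<^sub>m (n - 1)) C"
  defines "K \<equiv> C * transpose_mat C + 1\<^sub>m (n - 1)"
  defines "X \<equiv> 2 \<cdot>\<^sub>m (mat_inv K * (of_nat (n - 1) \<cdot>\<^sub>m 1\<^sub>m (n - 1) - ones_mat (n - 1) (n - 1)))"
  defines "Y \<equiv> ones_mat (n - 1) (n - 1) + transpose_mat C * X"
  shows "invertible_mat K \<and>
         MP_inverse M = (1 / (2 * of_nat (n - 1))) \<cdot>\<^sub>m
           four_block_mat (2 \<cdot>\<^sub>m ones_mat (n - 1) 1) X (- ones_mat (n - 1) 1) Y"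
proof -
  define m where "m = n - 1"
  have m3: "m \<ge> 3" using assms(1) unfolding m_def by simp
  have Ceq: "C = cyc m" unfolding C_def cyc_def m_def
    by (metis diff_diff_left numeral_2_eq_2 numeral_3_eq_3 one_add_one plus_1_eq_Suc)
  have "invertible_mat (cyc m * transpose_mat (cyc m) + 1\<^sub>m m) \<and>
    MP_inverse (four_block_mat (ones_mat 1 m) (0\<^sub>m 1 m) (1\<^sub>m m) (cyc m)) = (1 / (2 * of_nat m)) \<cdot>\<^sub>m
    four_block_mat (2 \<cdot>\<^sub>m ones_mat m 1)
      (2 \<cdot>\<^sub>m (mat_inv (cyc m * transpose_mat (cyc m) + 1\<^sub>m m) * (of_nat m \<cdot>\<^sub>m 1\<^sub>m m - ones_mat m m)))
      (- ones_mat m 1)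
      (ones_mat m m + transpose_mat (cyc m) *
        (2 \<cdot>\<^sub>m (mat_inv (cyc m * transpose_mat (cyc m) + 1\<^sub>m m) * (of_nat m \<cdot>\<^sub>m 1\<^sub>m m - ones_mat m m))))"
    by (rule main_alg[OF cyc_carrier _ cyc_mult_ones ones_mult_cyc]) (use m3 in auto)
  then show ?thesis unfolding M_def K_def X_def Y_def Ceq m_def[symmetric] .
qed

end
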